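(* Let $1\le d<\omega$, $2\le k<\omega$ and let $P\subseteq\mathbb R^d$ be a $k$-template. (a) If $P$ is simple, then $\chi(L(\mathbb R^d,P))$ is the least cardinal $\kappa$ such that $\kappa^{+(d-1)}\ge 2^{\aleph_0}$. (b) Suppose $I\subseteq d$ is a distinguisher for $P$ with $|I|=e(P)$, and let $Q=\{x\in\mathbb R^d : x\restriction I = y\restriction I \text{ for some } y\in P \text{ and } x_i=0 \text{ for } i\in d\setminus I\}$. Then $\chi(L(\mathbb R^d,Q))$ is the least cardinal $\kappa$ such that $\kappa^{+(e(P)-1)}\ge 2^{\aleph_0}$.
   Context: A $d$-dimensional $k$-template is a set $P$ of $d$-tuples with $|P|=k$. $P$ is simple if for every $m<d$ there are $x,y\in P$ such that for all $i<d$, $x_i=y_i$ iff $i\ne m$. If $P,Q$ are $d$-dimensional templates, $Q$ is a homomorphic image of $P$ if there is a surjection $f:P\to Q$ such that for all $x,y\in P$ and $i<d$, $x_i=y_i$ implies $f(x)_i=f(y)_i$. $L(\mathbb R^d,P)$ is the hypergraph with vertex set $\mathbb R^d$ whose edges are the $k$-templates contained in $\mathbb R^d$ that are homomorphic images of $P$. Here $d=\{0,\dots,d-1\}$; a set $I\subseteq d$ is a distinguisher for $P$ if for all distinct $x,y\in P$ there is $i\in I$ with $x_i\ne y_i$, and $e(P)$ is the least cardinality of a distinguisher. $x\restriction I$ is the restriction of the tuple $x$ to the coordinates in $I$. $\chi$ is chromatic number (least cardinal number of colors in a vertex coloring not constant on any edge). $\kappa^+$ is the successor cardinal, $\kappa^{+0}=\kappa$,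 $\kappa^{+(n+1)}=(\kappa^{+n})^+$. *)

theory Defs
  imports "HOL-Analysis.Analysis"
begin

text \<open>Points of R^d are vectors of type real^'n, with d = CARD('n) (so d >= 1).
  Coordinates are indexed by the finite type 'n, playing the role of d = {0,...,d-1}.\<close>

definition simple_template :: "(real^'n) set \<Rightarrow> bool" where
  "simple_template P \<longleftrightarrow>
     (\<forall>m. \<exists>x\<in>P. \<exists>y\<in>P. \<forall>i. (x $ i = y $ i) \<longleftrightarrow> i \<noteq> m)"

definition hom_image :: "(real^'n) set \<Rightarrow> (real^'n) set \<Rightarrow> bool" where
  "hom_image P Q \<longleftrightarrow>
     (\<exists>f. f ` P = Q \<and> (\<forall>x\<in>P. \<forall>y\<in>P. \<forall>i. x $ i = y $ i \<longrightarrow> f x $ i = f y $ i))"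

text \<open>The hypergraph L(R^d,P), given by its edge set (vertex set is all of R^d):
  the k-templates (k = card P) that are homomorphic images of P.\<close>
definition L_edges :: "(real^'n) set \<Rightarrow> (real^'n) set set" where
  "L_edges P = {Q. finite Q \<and> card Q = card P \<and> hom_image P Q}"

definition distinguisher :: "(real^'n) set \<Rightarrow> 'n set \<Rightarrow> bool" where
  "distinguisher P I \<longleftrightarrow> (\<forall>x\<in>P. \<forall>y\<in>P. x \<noteq> y \<longrightarrow> (\<exists>i\<in>I. x $ i \<noteq> y $ i))"

definition e_num :: "(real^'n) set \<Rightarrow> nat" where
  "e_num P = (LEAST n. \<exists>J. distinguisher P J \<and> card J = n)"

definition Q_of :: "(real^'n) set \<Rightarrow> 'n set \<Rightarrow> (real^'n) set" where
  "Q_of P I = {x. (\<exists>y\<in>P. \<forall>i\<in>I. x $ i = y $ i) \<and> (\<forall>i. i \<notin> I \<longrightarrow> x $ i = 0)}"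

definition colorable :: "'v set set \<Rightarrow> 'c set \<Rightarrow> bool" where
  "colorable E C \<longleftrightarrow>
     (\<exists>f. (\<forall>v. f v \<in> C) \<and> (\<forall>e\<in>E. \<not> (\<exists>c. \<forall>v\<in>e. f v = c)))"

text \<open>C has the chromatic number as cardinality (minimum over colour sets of type 'c).\<close>
definition is_chromatic_number :: "'v set set \<Rightarrow> 'c set \<Rightarrow> bool" where
  "is_chromatic_number E C \<longleftrightarrow>
     colorable E C \<and> (\<forall>D::'c set. colorable E D \<longrightarrow> (card_of C, card_of D) \<in> ordLeq)"

text \<open>succ_iter n K L: |L| = |K|^{+n}, witnessed by a chain of successor cardinals
  represented by sets of the type of L.\<close>
definition succ_iter :: "nat \<Rightarrow> 'a set \<Rightarrow> 'b set \<Rightarrow> bool" where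
  "succ_iter n K L \<longleftrightarrow>
     (\<exists>A :: nat \<Rightarrow> 'b set.
        (card_of (A 0), card_of K) \<in> ordIso \<and>
        (\<forall>i<n. (card_of (A (Suc i)), cardSuc (card_of (A i))) \<in> ordIso) \<and>
        A n = L)"

text \<open>|K|^{+n} >= 2^aleph_0 = |UNIV::real set|. If |K|^{+n} is not representable
  by a set of reals, it exceeds the continuum and the condition holds vacuously.\<close>
definition succ_ge_continuum :: "nat \<Rightarrow> 'a set \<Rightarrow> bool" where
  "succ_ge_continuum n K \<longleftrightarrow>
     (\<forall>L :: real set. succ_iter n K L \<longrightarrow> (card_of (UNIV::real set), card_of L) \<in> ordLeq)"

text \<open>chi(E) is the least cardinal kappa with kappa^{+n} >= 2^aleph_0.
  Cardinals are represented by sets of reals (all relevant ones are <= continuum).\<close>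
definition chi_is_least_succ_ge :: "'v set set \<Rightarrow> nat \<Rightarrow> bool" where
  "chi_is_least_succ_ge E n \<longleftrightarrow>
     (\<exists>C :: real set. is_chromatic_number E C \<and> succ_ge_continuum n C \<and>
        (\<forall>D :: real set. succ_ge_continuum n D \<longrightarrow> (card_of C, card_of D) \<in> ordLeq))"

end

theory Submission
  imports Defs
begin
unbundle cardinal_syntax


definition upd :: "real^'n \<Rightarrow> 'n \<Rightarrow> real \<Rightarrow> real^'n" where
  "upd z m t = (\<chi> l. if l = m then t else z $ l)"

lemma upd_nth[simp]: "upd z m t $ l = (if l = m then t else z $ l)"
  by (simp add: upd_def)

definition Pairs :: "'c set \<Rightarrow> real set \<Rightarrow> (('n \<Rightarrow> real set) \<times> 'c) set" where
  "Pairs D Y = {(G,c). (\<forall>l. G l \<subseteq> Y \<and> finite (G l)) \<and> c \<in> D}"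

definition pig :: "nat \<Rightarrow> 'a set \<Rightarrow> 'b set \<Rightarrow> bool" where
  "pig N X Z \<longleftrightarrow> (\<forall>h. (\<forall>t\<in>X. h t \<in> Z) \<longrightarrow>
      (\<exists>p T. T \<subseteq> X \<and> finite T \<and> N \<le> card T \<and> (\<forall>t\<in>T. h t = p)))"

definition grid_ok :: "(real^'n \<Rightarrow> 'c) \<Rightarrow> 'c set \<Rightarrow> nat \<Rightarrow> 'n set \<Rightarrow> real set \<Rightarrow> real^'n \<Rightarrow> bool" where
  "grid_ok f D N J X z \<longleftrightarrow> (\<exists>G c. (\<forall>l. G l \<subseteq> X \<and> finite (G l)) \<and> (\<forall>l\<in>J. N \<le> card (G l)) \<and> c \<in> D \<and>
      (\<forall>x. (\<forall>l\<in>J. x$l \<in> G l) \<and> (\<forall>l. l \<notin> J \<longrightarrow> x$l = z$l) \<longrightarrow> f x = c))"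

lemma grid_generic:
  fixes f :: "real^'n \<Rightarrow> 'c" and Big :: "nat \<Rightarrow> real set \<Rightarrow> bool"
  assumes fD: "\<And>x. f x \<in> D" and N1: "1 \<le> N"
    and base: "\<And>X. Big 0 X \<Longrightarrow> pig N X D"
    and step: "\<And>i X. i < K \<Longrightarrow> Big (Suc i) X \<Longrightarrow>
        \<exists>Y\<subseteq>X. Big i Y \<and> pig N X (Pairs D Y :: (('n \<Rightarrow> real set) \<times> 'c) set)"
  shows "i \<le> K \<Longrightarrow> card J = Suc i \<Longrightarrow> Big i X \<Longrightarrow> grid_ok f D N J X z"
proof (induction i arbitrary: J X z)
  case (0 J X z)
  then obtain m where J: "J = {m}" using card_1_singletonE by auto
  have "pig N X D" using base 0 by blast
  then obtain c T where T: "T \<subseteq> X" "finite T" "N \<le> card T" "\<forall>t\<in>T. f (upd z m t) = c"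
    using \<open>pig N X D\<close>[unfolded pig_def, rule_format, of "\<lambda>t. f (upd z m t)"] fD by blast
  have "T \<noteq> {}" using T N1 by auto
  then obtain t0 where "t0 \<in> T" by auto
  hence cD: "c \<in> D" using T fD by metis
  let ?G = "(\<lambda>_. {})(m := T)"
  have P: "f x = c" if x: "(\<forall>l\<in>J. x $ l \<in> ?G l) \<and> (\<forall>l. l \<notin> J \<longrightarrow> x $ l = z $ l)" for x :: "real^'n"
  proof -
    have "x = upd z m (x$m)" using x J by (simp add: vec_eq_iff)
    moreover have "x$m \<in> T" using x J by auto
    ultimately show "f x = c" using T by metis
  qed
  show ?case unfolding grid_ok_def
    apply (rule exI[of _ ?G], rule exI[of _ c])
    using T J cD P by auto
next
  case (Suc i J X z)
  obtain m where m: "m \<in> J" using Suc.prems by (metis card.empty card_ge_0_finite zero_less_Suc ex_in_conv card_gt_0_iff)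
  define J' where "J' = J - {m}"
  have cJ': "card J' = Suc i" using Suc.prems m unfolding J'_def
    by (metis card_Diff_singleton_if card.infinite diff_Suc_1 nat.simps(3))
  obtain Y where Y: "Y \<subseteq> X" "Big i Y" "pig N X (Pairs D Y :: (('n \<Rightarrow> real set) \<times> 'c) set)"
    using step Suc.prems by (metis Suc_le_lessD)
  define Prop where "Prop = (\<lambda>t (G::'n \<Rightarrow> real set, c). (\<forall>l\<in>J'. N \<le> card (G l)) \<and>
     (\<forall>x. (\<forall>l\<in>J'. x$l \<in> G l) \<and> (\<forall>l. l \<notin> J' \<longrightarrow> x$l = upd z m t $ l) \<longrightarrow> f x = c))"
  have ex: "\<exists>p. p \<in> Pairs D Y \<and> Prop t p" for t
  proof -
    have "grid_ok f D N J' Y (upd z m t)" using Suc.IH[of J' Y] Suc.prems cJ' Y by auto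
    then obtain G c where "(\<forall>l. G l \<subseteq> Y \<and> finite (G l))" "c \<in> D" "Prop t (G,c)"
      unfolding grid_ok_def Prop_def by (auto simp del: upd_nth)
    then show ?thesis unfolding Pairs_def by blast
  qed
  define h where "h = (\<lambda>t. SOME p. p \<in> Pairs D Y \<and> Prop t p)"
  have h: "h t \<in> Pairs D Y \<and> Prop t (h t)" for t unfolding h_def using ex[of t] by (rule someI_ex)
  obtain p T where T: "T \<subseteq> X" "finite T" "N \<le> card T" "\<forall>t\<in>T. h t = p"
    using Y(3)[unfolded pig_def, rule_format, of h] h by blast
  obtain G c where p: "p = (G, c)" by (cases p)
  have "T \<noteq> {}" using T N1 by auto
  then obtain t0 where t0: "t0 \<in> T" by auto
  have pP: "p \<in> Pairs D Y" using h t0 T by metis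
  let ?G = "G(m := T)"
  have G1: "?G l \<subseteq> X \<and> finite (?G l)" for l
  proof -
    have "G l \<subseteq> Y \<and> finite (G l)" using pP p unfolding Pairs_def by auto
    then show ?thesis using T Y(1) by auto
  qed
  have cD: "c \<in> D" using pP p unfolding Pairs_def by auto
  have G2: "N \<le> card (?G l)" if "l \<in> J" for l
    using that h[of t0] t0 T p unfolding Prop_def J'_def by auto
  have G3: "f x = c" if x: "(\<forall>l\<in>J. x $ l \<in> ?G l) \<and> (\<forall>l. l \<notin> J \<longrightarrow> x $ l = z $ l)" for x :: "real^'n"
  proof -
    have t: "x$m \<in> T" using x m by auto
    have "Prop (x$m) p" using h[of "x$m"] T t by metis
    moreover have "(\<forall>l\<in>J'. x$l \<in> G l) \<and> (\<forall>l. l \<notin> J' \<longrightarrow> x$l = upd z m (x$m) $ l)"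
      using x unfolding J'_def by (auto, metis fun_upd_other)
    ultimately show "f x = c" unfolding Prop_def p by auto
  qed
  show ?case unfolding grid_ok_def
    apply (rule exI[of _ ?G], rule exI[of _ c])
    using G1 G2 G3 cD by blast
qed




lemma finite_le_infinite: "finite A \<Longrightarrow> infinite B \<Longrightarrow> |A| \<le>o |B|"
  by (rule ordLess_imp_ordLeq, rule finite_ordLess_infinite[OF card_of_Well_order card_of_Well_order]) (simp_all add: Field_card_of)

lemma pig_inf:
  assumes W: "infinite W" and ZW: "|Z| \<le>o |W|" and WX: "|W| <o |X|"
  shows "pig N X Z"
  unfolding pig_def
proof (intro allI impI)
  fix h assume hZ: "\<forall>t\<in>X. h t \<in> Z"
  show "\<exists>p T. T \<subseteq> X \<and> finite T \<and> N \<le> card T \<and> (\<forall>t\<in>T. h t = p)"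
  proof (rule ccontr)
    assume no: "\<not> ?thesis"
    have fin: "finite {t\<in>X. h t = p}" for p
    proof (rule ccontr)
      assume "infinite {t\<in>X. h t = p}"
      then obtain T where "T \<subseteq> {t\<in>X. h t = p}" "finite T" "card T = N"
        using infinite_arbitrarily_large by blast
      then show False using no by (metis (mono_tags, lifting) mem_Collect_eq order_refl subset_iff)
    qed
    have "X = (\<Union>p\<in>h ` X. {t\<in>X. h t = p})" by auto
    moreover have "|\<Union>p\<in>h ` X. {t\<in>X. h t = p}| \<le>o |W|"
    proof (rule card_of_UNION_ordLeq_infinite[OF W])
      have "|h ` X| \<le>o |Z|" using hZ by (intro card_of_mono1) auto
      then show "|h ` X| \<le>o |W|" using ZW ordLeq_transitive by blast
      show "\<forall>i\<in>h ` X. |{t \<in> X. h t = i}| \<le>o |W|" using fin finite_le_infinite W by blast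
    qed
    ultimately have "|X| \<le>o |W|" by simp
    then show False using WX not_ordLess_ordLeq by blast
  qed
qed

lemma pig_fin:
  assumes Z: "finite Z" and X: "finite X" and c: "card Z * N < card X"
  shows "pig N X Z"
  unfolding pig_def
proof (intro allI impI)
  fix h assume hZ: "\<forall>t\<in>X. h t \<in> Z"
  show "\<exists>p T. T \<subseteq> X \<and> finite T \<and> N \<le> card T \<and> (\<forall>t\<in>T. h t = p)"
  proof (rule ccontr)
    assume no: "\<not> ?thesis"
    have lt: "card {t\<in>X. h t = p} \<le> N" for p
      using no X by (metis (mono_tags, lifting) finite_subset mem_Collect_eq mem_Collect_eq nat_le_linear subsetI)
    have "X \<subseteq> (\<Union>p\<in>Z. {t\<in>X. h t = p})" using hZ by auto
    hence "card X \<le> card (\<Union>p\<in>Z. {t\<in>X. h t = p})" using Z X by (intro card_mono) auto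
    also have "\<dots> \<le> (\<Sum>p\<in>Z. card {t\<in>X. h t = p})" by (rule card_UN_le[OF Z])
    also have "\<dots> \<le> (\<Sum>p\<in>Z. N)" by (intro sum_mono lt)
    also have "\<dots> = card Z * N" by simp
    finally show False using c by simp
  qed
qed

fun En :: "'a set \<Rightarrow> nat \<Rightarrow> 'a set set" where
  "En A 0 = {{}}"
| "En A (Suc k) = (\<lambda>(S,a). insert a S) ` (En A k \<times> A)"

lemma En_card: assumes A: "infinite A" shows "|En A k| \<le>o |A|"
proof (induction k)
  case 0
  show ?case using A card_of_singl_ordLeq[of A "{}"] by auto
next
  case (Suc k)
  have "|En A (Suc k)| \<le>o |En A k \<times> A|" by (simp add: card_of_image)
  also have "|En A k \<times> A| \<le>o |A \<times> A|" using Suc by (rule card_of_Times_mono1)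
  also have "|A \<times> A| =o |A|" using A card_of_Times_infinite[of A A]
    by (metis card_of_Times_infinite finite.emptyI ordLeq_refl card_of_Card_order card_order_on_def)
  finally show ?case .
qed

lemma fpow_card:
  assumes A: "infinite A" shows "|{S. S \<subseteq> A \<and> finite S}| \<le>o |A|"
proof -
  have "S \<in> En A (card S)" if "finite S" "S \<subseteq> A" for S
    using that
  proof (induction S rule: finite_induct)
    case empty then show ?case by simp
  next
    case (insert x F)
    then show ?case by (auto simp: image_iff intro!: bexI[of _ "(F,x)"])
  qed
  hence "{S. S \<subseteq> A \<and> finite S} \<subseteq> (\<Union>k. En A k)" by blast
  moreover have "|\<Union>k. En A k| \<le>o |A|"
    using card_of_UNION_ordLeq_infinite[OF A, of UNIV "En A"] En_card[OF A]
      infinite_iff_card_of_nat A by blast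
  ultimately show ?thesis using card_of_mono1 ordLeq_transitive by blast
qed

lemma Pairs_card:
  assumes Y: "infinite Y" and D: "|D| \<le>o |Y|"
  shows "|Pairs D Y :: (('n::finite \<Rightarrow> real set) \<times> 'c) set| \<le>o |Y|"
proof -
  let ?PG = "{G::'n \<Rightarrow> real set. \<forall>l. G l \<subseteq> Y \<and> finite (G l)}"
  let ?B = "(UNIV::'n set) \<times> Y"
  have Yne: "Y \<noteq> {}" using Y by auto
  have B: "infinite ?B"
  proof
    assume "finite ?B"
    hence "finite (snd ` ?B)" by (rule finite_imageI)
    moreover have "snd ` ?B = Y" by force
    ultimately show False using Y by simp
  qed
  have BY: "|?B| \<le>o |Y|"
  proof -
    have U: "|UNIV::'n set| \<le>o |Y|" by (rule finite_le_infinite[OF finite_class.finite_UNIV Y])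
    have "|Y \<times> (UNIV::'n set)| =o |Y|" using card_of_Times_infinite[OF Y UNIV_not_empty U] by (rule conjunct1)
    moreover have "|?B| =o |Y \<times> (UNIV::'n set)|" by (rule card_of_Times_commute)
    ultimately have "|?B| =o |Y|" by (rule ordIso_transitive[rotated])
    then show ?thesis by (rule ordIso_imp_ordLeq)
  qed
  have "inj_on (\<lambda>G. Sigma UNIV G) ?PG"
  proof (rule inj_onI)
    fix G1 G2 :: "'n \<Rightarrow> real set" assume eq: "Sigma UNIV G1 = Sigma UNIV G2"
    show "G1 = G2"
    proof
      fix l show "G1 l = G2 l"
      proof (intro set_eqI iffI)
        fix y assume "y \<in> G1 l" then have "(l,y) \<in> Sigma UNIV G2" using eq by blast
        then show "y \<in> G2 l" by blast
      next
        fix y assume "y \<in> G2 l" then have "(l,y) \<in> Sigma UNIV G1" using eq by blast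
        then show "y \<in> G1 l" by blast
      qed
    qed
  qed
  moreover have "(\<lambda>G. Sigma UNIV G) ` ?PG \<subseteq> {S. S \<subseteq> ?B \<and> finite S}"
  proof
    fix S assume "S \<in> (\<lambda>G. Sigma UNIV G) ` ?PG"
    then obtain G where G: "\<forall>l. G l \<subseteq> Y \<and> finite (G l)" "S = Sigma UNIV G" by blast
    have "finite S" unfolding G(2) by (rule finite_SigmaI) (use G(1) in auto)
    moreover have "S \<subseteq> ?B" using G by auto
    ultimately show "S \<in> {S. S \<subseteq> ?B \<and> finite S}" by blast
  qed
  ultimately have "|?PG| \<le>o |{S. S \<subseteq> ?B \<and> finite S}|" using card_of_ordLeq by blast
  also have "|{S. S \<subseteq> ?B \<and> finite S}| \<le>o |?B|" by (rule fpow_card[OF B])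
  also note BY
  finally have PG: "|?PG| \<le>o |Y|" .
  have "Pairs D Y \<subseteq> ?PG \<times> D" unfolding Pairs_def by auto
  hence "|Pairs D Y :: (('n::finite \<Rightarrow> real set) \<times> 'c) set| \<le>o |?PG \<times> D|" by (rule card_of_mono1)
  also have "|?PG \<times> D| \<le>o |Y|"
    by (rule card_of_Times_ordLeq_infinite_Field[of "|Y|", simplified]) (use Y PG D in \<open>auto simp: card_of_Card_order Field_card_of card_of_card_order_on\<close>)
  finally show ?thesis .
qed




lemma grid_edge:
  fixes P :: "(real^'n) set" and f :: "real^'n \<Rightarrow> 'c"
  assumes Pfin: "finite P"
    and offJ: "\<forall>x\<in>P. \<forall>y\<in>P. \<forall>l. l \<notin> J \<longrightarrow> x$l = y$l"
    and g: "grid_ok f D (card P) J X z"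
  shows "\<exists>Q\<in>L_edges P. \<exists>c. \<forall>v\<in>Q. f v = c"
proof -
  obtain G c where G: "\<forall>l. G l \<subseteq> X \<and> finite (G l)" "\<forall>l\<in>J. card P \<le> card (G l)"
    "\<forall>x. (\<forall>l\<in>J. x$l \<in> G l) \<and> (\<forall>l. l \<notin> J \<longrightarrow> x$l = z$l) \<longrightarrow> f x = c"
    using g unfolding grid_ok_def by blast
  have "\<exists>\<phi>. \<phi> ` ((\<lambda>x. x$l) ` P) \<subseteq> G l \<and> inj_on \<phi> ((\<lambda>x. x$l) ` P)" if "l \<in> J" for l
  proof (rule card_le_inj)
    show "finite ((\<lambda>x. x$l) ` P)" using Pfin by simp
    show "finite (G l)" using G by simp
    have "card ((\<lambda>x. x$l) ` P) \<le> card P" by (rule card_image_le[OF Pfin])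
    then show "card ((\<lambda>x. x$l) ` P) \<le> card (G l)" using G that by (meson le_trans)
  qed
  then obtain \<phi> where \<phi>: "\<And>l. l \<in> J \<Longrightarrow> \<phi> l ` ((\<lambda>x. x$l) ` P) \<subseteq> G l \<and> inj_on (\<phi> l) ((\<lambda>x. x$l) ` P)"
    by metis
  define F where "F = (\<lambda>x::real^'n. \<chi> l. if l \<in> J then \<phi> l (x$l) else z$l)"
  have Fnth: "F x $ l = (if l \<in> J then \<phi> l (x$l) else z$l)" for x l unfolding F_def by simp
  have inj: "inj_on F P"
  proof (rule inj_onI)
    fix x y assume x: "x \<in> P" and y: "y \<in> P" and eq: "F x = F y"
    show "x = y"
    proof (rule vec_eq_iff[THEN iffD2], rule allI)
      fix l show "x$l = y$l"
      proof (cases "l \<in> J")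
        case True
        have "\<phi> l (x$l) = \<phi> l (y$l)" using eq True Fnth by metis
        then show ?thesis using \<phi>[OF True] x y by (auto dest: inj_onD)
      next
        case False then show ?thesis using offJ x y by blast
      qed
    qed
  qed
  let ?Q = "F ` P"
  have "?Q \<in> L_edges P"
    unfolding L_edges_def hom_image_def
  proof (intro CollectI conjI exI[of _ F])
    show "finite ?Q" using Pfin by simp
    show "card ?Q = card P" using card_image[OF inj] .
    show "F ` P = ?Q" ..
    show "\<forall>x\<in>P. \<forall>y\<in>P. \<forall>i. x $ i = y $ i \<longrightarrow> F x $ i = F y $ i" by (simp add: Fnth)
  qed
  moreover have "\<forall>v\<in>?Q. f v = c"
  proof
    fix v assume "v \<in> ?Q"
    then obtain x where x: "x \<in> P" "v = F x" by blast
    have "(\<forall>l\<in>J. v$l \<in> G l) \<and> (\<forall>l. l \<notin> J \<longrightarrow> v$l = z$l)"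
      using x \<phi> by (auto simp: Fnth)
    then show "f v = c" using G(3) by blast
  qed
  ultimately show ?thesis by blast
qed

lemma colorable_no_grid:
  fixes P :: "(real^'n) set"
  assumes Pfin: "finite P"
    and offJ: "\<forall>x\<in>P. \<forall>y\<in>P. \<forall>l. l \<notin> J \<longrightarrow> x$l = y$l"
    and col: "\<forall>e\<in>L_edges P. \<not> (\<exists>c. \<forall>v\<in>e. f v = c)"
  shows "\<not> grid_ok f D (card P) J X z"
  using grid_edge[OF Pfin offJ] col by blast

fun Mseq :: "nat \<Rightarrow> nat \<Rightarrow> nat \<Rightarrow> nat \<Rightarrow> nat" where
  "Mseq r N d 0 = r * N + 1"
| "Mseq r N d (Suc i) = max (Mseq r N d i) (2 ^ (Mseq r N d i * d) * r * N + 1)"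

lemma Pairs_fin:
  assumes Y: "finite Y" and D: "finite D"
  shows "finite (Pairs D Y :: (('n::finite \<Rightarrow> real set) \<times> 'c) set) \<and>
         card (Pairs D Y :: (('n::finite \<Rightarrow> real set) \<times> 'c) set) \<le> 2 ^ (card Y * CARD('n)) * card D"
proof -
  let ?PG = "PiE (UNIV::'n set) (\<lambda>_. Pow Y)"
  have sub: "(Pairs D Y :: (('n::finite \<Rightarrow> real set) \<times> 'c) set) \<subseteq> ?PG \<times> D"
    unfolding Pairs_def by auto
  have fin: "finite (?PG \<times> D)" using Y D by (simp add: finite_PiE)
  have "card ?PG = 2 ^ (card Y * CARD('n))"
    using Y by (simp add: card_PiE card_Pow power_mult)
  hence "card (?PG \<times> D) = 2 ^ (card Y * CARD('n)) * card D" by (simp add: card_cartesian_product)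
  then show ?thesis using sub fin card_mono finite_subset by metis
qed




lemma LB:
  fixes P :: "(real^'n) set" and D :: "real set"
  assumes Pfin: "finite P" and Pne: "P \<noteq> {}"
    and offJ: "\<forall>x\<in>P. \<forall>y\<in>P. \<forall>l. l \<notin> J \<longrightarrow> x$l = y$l"
    and cJ: "card J = Suc n"
    and col: "colorable (L_edges P) D"
  shows "succ_ge_continuum n D"
proof -
  obtain f where fD: "\<forall>v. f v \<in> D" and fc: "\<forall>e\<in>L_edges P. \<not>(\<exists>c. \<forall>v\<in>e. f v = c)"
    using col unfolding colorable_def by blast
  let ?N = "card P"
  have N1: "1 \<le> ?N" using Pfin Pne by (simp add: Suc_le_eq card_gt_0_iff)
  have nog: "\<not> grid_ok f D ?N J X z" for X z using colorable_no_grid[OF Pfin offJ fc] .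
  show ?thesis
  proof (cases "finite D")
    case True
    define M where "M = Mseq (card D) ?N CARD('n)"
    define Big where "Big = (\<lambda>i (X::real set). finite X \<and> M i \<le> card X)"
    have g: "grid_ok f D ?N J X z" if "Big n X" for X z
    proof (rule grid_generic[where Big=Big and K=n and i=n])
      show "\<And>x. f x \<in> D" using fD by blast
      show "1 \<le> ?N" by (rule N1)
      show "pig ?N X D" if "Big 0 X" for X
        by (rule pig_fin) (use that True in \<open>auto simp: Big_def M_def\<close>)
      show "\<exists>Y\<subseteq>X. Big i Y \<and> pig ?N X (Pairs D Y :: (('n \<Rightarrow> real set) \<times> real) set)"
        if "i < n" "Big (Suc i) X" for i X
      proof -
        have X: "finite X" "M (Suc i) \<le> card X" using that by (auto simp: Big_def)
        hence "M i \<le> card X" by (simp add: M_def)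
        then obtain Y where Y: "Y \<subseteq> X" "card Y = M i" using obtain_subset_with_card_n by metis
        have Yf: "finite Y" using Y X finite_subset by blast
        have PF: "finite (Pairs D Y :: (('n \<Rightarrow> real set) \<times> real) set) \<and>
          card (Pairs D Y :: (('n \<Rightarrow> real set) \<times> real) set) \<le> 2 ^ (card Y * CARD('n)) * card D"
          by (rule Pairs_fin[OF Yf True])
        have "card (Pairs D Y :: (('n \<Rightarrow> real set) \<times> real) set) * ?N \<le> 2 ^ (M i * CARD('n)) * card D * ?N"
          using PF Y by simp
        also have "\<dots> < card X" using X(2) by (simp add: M_def)
        finally have "pig ?N X (Pairs D Y :: (('n \<Rightarrow> real set) \<times> real) set)"
          by (intro pig_fin) (use PF X in auto)
        moreover have "Big i Y" using Yf Y by (simp add: Big_def)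
        ultimately show ?thesis using Y by blast
      qed
      show "n \<le> n" by simp
      show "card J = Suc n" by (rule cJ)
      show "Big n X" by (rule that)
    qed
    obtain X :: "real set" where "finite X" "card X = M n"
      using infinite_arbitrarily_large[OF infinite_UNIV_char_0] by blast
    then have "Big n X" by (simp add: Big_def)
    then show ?thesis using g nog by blast
  next
    case Dinf: False
    show ?thesis unfolding succ_ge_continuum_def succ_iter_def
    proof (intro allI impI)
      fix L :: "real set"
      assume "\<exists>A. ( |A 0|, |D| ) \<in> ordIso \<and> (\<forall>i<n. ( |A (Suc i)|, cardSuc |A i| ) \<in> ordIso) \<and> A n = L"
      then obtain A :: "nat \<Rightarrow> real set" where A0: "|A 0| =o |D|"
        and As: "\<And>i. i < n \<Longrightarrow> |A (Suc i)| =o cardSuc |A i|" and An: "A n = L" by blast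
      show "|UNIV::real set| \<le>o |L|"
      proof (rule ccontr)
        assume "\<not> |UNIV::real set| \<le>o |L|"
        hence Lt: "|L| <o |UNIV::real set|"
          using not_ordLeq_iff_ordLess card_of_Well_order by blast
        have Ainf: "infinite (A i) \<and> |D| \<le>o |A i|" if "i \<le> n" for i
          using that
        proof (induction i)
          case 0
          have "|D| =o |A 0|" using A0 by (rule ordIso_symmetric)
          then show ?case using Dinf card_of_ordIso_finite ordIso_imp_ordLeq by blast
        next
          case (Suc i)
          have IH: "infinite (A i) \<and> |D| \<le>o |A i|" using Suc by simp
          have "|A i| \<le>o cardSuc |A i|" by (rule cardSuc_ordLeq[OF card_of_Card_order])
          also have "cardSuc |A i| =o |A (Suc i)|" using As[of i] Suc.prems by (simp add: ordIso_symmetric)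
          finally have le: "|A i| \<le>o |A (Suc i)|" .
          then show ?case using IH card_of_ordLeq_infinite ordLeq_transitive by blast
        qed
        define Big where "Big = (\<lambda>i (X::real set). |A i| <o |X| )"
        have "grid_ok f D ?N J UNIV 0"
        proof (rule grid_generic[where Big=Big and K=n and i=n])
          show "\<And>x. f x \<in> D" using fD by blast
          show "1 \<le> ?N" by (rule N1)
          show "pig ?N X D" if "Big 0 X" for X
          proof (rule pig_inf[OF Dinf])
            show "|D| \<le>o |D|" by (rule ordLeq_refl[OF card_of_Card_order])
            have "|D| =o |A 0|" using A0 by (rule ordIso_symmetric)
            then show "|D| <o |X|" using that unfolding Big_def by (rule ordIso_ordLess_trans)
          qed
          show "\<exists>Y\<subseteq>X. Big i Y \<and> pig ?N X (Pairs D Y :: (('n \<Rightarrow> real set) \<times> real) set)"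
            if "i < n" "Big (Suc i) X" for i X
          proof -
            have lt: "|A (Suc i)| <o |X|" using that by (simp add: Big_def)
            then obtain g where g: "inj_on g (A (Suc i))" "g ` A (Suc i) \<subseteq> X"
              using card_of_ordLeq ordLess_imp_ordLeq by metis
            define Y where "Y = g ` A (Suc i)"
            have "bij_betw g (A (Suc i)) Y" using g unfolding Y_def by (simp add: bij_betw_imageI)
            hence AY: "|A (Suc i)| =o |Y|" using card_of_ordIso by blast
            have YA: "|Y| =o |A (Suc i)|" using AY by (rule ordIso_symmetric)
            have "|A i| <o cardSuc |A i|" by (rule cardSuc_greater[OF card_of_Card_order])
            also have "cardSuc |A i| =o |A (Suc i)|" using As[OF that(1)] by (rule ordIso_symmetric)
            also note AY
            finally have BY: "Big i Y" unfolding Big_def .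
            have AI: "infinite (A (Suc i)) \<and> |D| \<le>o |A (Suc i)|" using Ainf that(1) by simp
            have Yinf: "infinite Y" using AI AY card_of_ordIso_finite by blast
            have DY: "|D| \<le>o |Y|" using AI AY ordLeq_ordIso_trans by blast
            have YX: "|Y| <o |X|" using YA lt by (rule ordIso_ordLess_trans)
            have "pig ?N X (Pairs D Y :: (('n \<Rightarrow> real set) \<times> real) set)"
              by (rule pig_inf[OF Yinf Pairs_card[OF Yinf DY] YX])
            then show ?thesis using BY g(2) unfolding Y_def by blast
          qed
          show "n \<le> n" by simp
          show "card J = Suc n" by (rule cJ)
          show "Big n UNIV" using Lt An by (simp add: Big_def)
        qed
        then show False using nog by blast
      qed
    qed
  qed
qed




lemma finite_max_rel_aux:
  assumes "finite S" "S \<noteq> {}" "S \<subseteq> U"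
    and tot: "\<And>a b. a\<in>U \<Longrightarrow> b\<in>U \<Longrightarrow> a \<noteq> b \<Longrightarrow> lt a b \<or> lt b a"
    and tr: "\<And>a b c. a\<in>U \<Longrightarrow> b\<in>U \<Longrightarrow> c\<in>U \<Longrightarrow> lt a b \<Longrightarrow> lt b c \<Longrightarrow> lt a c"
  shows "\<exists>m\<in>S. \<forall>a\<in>S. a \<noteq> m \<longrightarrow> lt a m"
  using assms(1,2,3)
proof (induction S rule: finite_ne_induct)
  case (singleton x) then show ?case by simp
next
  case (insert x F)
  have FU: "F \<subseteq> U" and xU: "x \<in> U" using insert.prems by auto
  obtain m where m: "m \<in> F" "\<And>a. a\<in>F \<Longrightarrow> a \<noteq> m \<Longrightarrow> lt a m" using insert.IH[OF FU] by blast
  have mU: "m \<in> U" using m(1) FU by blast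
  show ?case
  proof (cases "lt m x")
    case True
    have "lt a x" if a: "a \<in> insert x F" "a \<noteq> x" for a
    proof -
      have aF: "a \<in> F" using a by simp
      show "lt a x"
      proof (cases "a = m")
        case True then show ?thesis using \<open>lt m x\<close> by simp
      next
        case False then have "lt a m" using m aF by blast
        then show ?thesis using tr[of a m x] \<open>lt m x\<close> aF FU mU xU by blast
      qed
    qed
    then show ?thesis by blast
  next
    case False
    have "x \<noteq> m" using insert.hyps m by blast
    hence "lt x m" using False tot[OF xU mU] by blast
    then show ?thesis using m by (intro bexI[of _ m]) auto
  qed
qed

lemma lex_trans:
  assumes "trans R" "antisym R"
    and "(ka \<noteq> kb \<and> (ka,kb)\<in>R) \<or> (ka = kb \<and> (ta::nat) < tb)"
    and "(kb \<noteq> kc \<and> (kb,kc)\<in>R) \<or> (kb = kc \<and> tb < tc)"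
  shows "(ka \<noteq> kc \<and> (ka,kc)\<in>R) \<or> (ka = kc \<and> ta < tc)"
proof -
  { assume 1: "ka \<noteq> kb" "(ka,kb)\<in>R" and 2: "kb \<noteq> kc" "(kb,kc)\<in>R"
    have "(ka,kc) \<in> R" using 1 2 assms(1) unfolding trans_def by blast
    moreover have "ka \<noteq> kc" using 1 2 assms(2) unfolding antisym_def by blast
    ultimately have ?thesis by blast }
  then show ?thesis using assms(3,4) by auto
qed

definition Kgood :: "'n set \<Rightarrow> real set \<Rightarrow> real set \<Rightarrow> (real^'n \<Rightarrow> 'n \<times> real) \<Rightarrow> bool" where
  "Kgood J X C g \<longleftrightarrow> (\<forall>x. fst (g x) \<in> J \<and> snd (g x) \<in> C) \<and>
     (\<forall>x y m. m \<in> J \<and> (\<forall>l\<in>J. x$l \<in> X \<and> y$l \<in> X) \<and> (\<forall>l\<in>J. l \<noteq> m \<longrightarrow> x$l = y$l)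
        \<and> x$m \<noteq> y$m \<and> g x = g y \<longrightarrow> fst (g x) \<noteq> m)"

lemma under_small:
  assumes Binf: "infinite B" and v: "a \<in> Field (cardSuc |B| )"
  shows "|{b. (b, a) \<in> cardSuc |B|}| \<le>o |B|"
proof -
  let ?R = "cardSuc |B|"
  have CR: "Card_order ?R" by (rule cardSuc_Card_order[OF card_of_Card_order])
  have "|underS ?R a| <o ?R" by (rule card_of_underS[OF CR v])
  hence U: "|underS ?R a| \<le>o |B|"
    using cardSuc_ordLeq_ordLess[OF card_of_Card_order card_of_Card_order] by blast
  have S: "|{a}| \<le>o |B|" using Binf card_of_singl_ordLeq[of B a] by auto
  have "{b. (b, a) \<in> ?R} \<subseteq> underS ?R a \<union> {a}" unfolding underS_def by auto
  hence "|{b. (b, a) \<in> ?R}| \<le>o |underS ?R a \<union> {a}|" by (rule card_of_mono1)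
  also have "|underS ?R a \<union> {a}| \<le>o |B|"
    using card_of_Un_ordLeq_infinite_Field[of "|B|" "underS ?R a" "{a}"] Binf U S
    by (simp add: Field_card_of card_of_Card_order card_of_card_order_on)
  finally show ?thesis .
qed

lemma kur:
  fixes B :: "nat \<Rightarrow> real set"
  assumes Binf: "\<And>j. infinite (B j)" and Bs: "\<And>j. |B (Suc j)| \<le>o cardSuc |B j|"
  shows "card (J::'n::finite set) = Suc i \<Longrightarrow> |X| \<le>o |B i| \<Longrightarrow> \<exists>g. Kgood J X (B 0) g"
proof (induction i arbitrary: J X)
  case (0 J X)
  then obtain m0 where J: "J = {m0}" using card_1_singletonE by auto
  obtain h where h: "inj_on h X" "h ` X \<subseteq> B 0" using 0 card_of_ordLeq by metis
  obtain b0 where b0: "b0 \<in> B 0" using Binf[of 0] by (metis finite.emptyI ex_in_conv)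
  define g where "g = (\<lambda>x::real^'n. (m0, if x$m0 \<in> X then h (x$m0) else b0))"
  have "Kgood J X (B 0) g"
    unfolding Kgood_def
  proof (intro conjI allI impI)
    fix x show "fst (g x) \<in> J" using J g_def by simp
    show "snd (g x) \<in> B 0" using h b0 by (auto simp: g_def)
  next
    fix x y m assume a: "m \<in> J \<and> (\<forall>l\<in>J. x$l \<in> X \<and> y$l \<in> X) \<and> (\<forall>l\<in>J. l \<noteq> m \<longrightarrow> x$l = y$l)
        \<and> x$m \<noteq> y$m \<and> g x = g y"
    then have "m = m0" "x$m0 \<in> X" "y$m0 \<in> X" using J by auto
    then have "h (x$m0) = h (y$m0)" using a by (simp add: g_def)
    then have "x$m0 = y$m0" using h(1) \<open>x$m0 \<in> X\<close> \<open>y$m0 \<in> X\<close> by (meson inj_onD h(1))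
    then show "fst (g x) \<noteq> m" using a \<open>m = m0\<close> by simp
  qed
  then show ?case by blast
next
  case (Suc i J X)
  let ?R = "cardSuc |B i|"
  have CR: "Card_order ?R" by (rule cardSuc_Card_order[OF card_of_Card_order])
  have WR: "Well_order ?R" using CR by (simp add: card_order_on_def)
  have "|X| \<le>o ?R" using Suc.prems(2) Bs[of i] ordLeq_transitive by blast
  also have "?R =o |Field ?R|" using card_of_Field_ordIso[OF CR] by (rule ordIso_symmetric)
  finally have "|X| \<le>o |Field ?R|" .
  then obtain e where e: "inj_on e X" "e ` X \<subseteq> Field ?R" using card_of_ordLeq by metis
  have Rrefl: "a \<in> Field ?R \<Longrightarrow> (a,a) \<in> ?R" for a
    using WR unfolding well_order_on_def linear_order_on_def partial_order_on_def preorder_on_def refl_on_def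
    by blast
  have Rtot: "a \<in> Field ?R \<Longrightarrow> b \<in> Field ?R \<Longrightarrow> (a,b) \<in> ?R \<or> (b,a) \<in> ?R" for a b
    using WR Rrefl unfolding well_order_on_def linear_order_on_def total_on_def by metis
  have Ranti: "(a,b) \<in> ?R \<Longrightarrow> (b,a) \<in> ?R \<Longrightarrow> a = b" for a b
    using WR unfolding well_order_on_def linear_order_on_def partial_order_on_def antisym_def by blast
  have Rtrans: "(a,b) \<in> ?R \<Longrightarrow> (b,c) \<in> ?R \<Longrightarrow> (a,c) \<in> ?R" for a b c
    using WR unfolding well_order_on_def linear_order_on_def partial_order_on_def preorder_on_def trans_def
    by blast
  obtain \<tau> :: "'n \<Rightarrow> nat" where \<tau>: "inj \<tau>" using finite_imp_inj_to_nat_seg[OF finite_class.finite_UNIV] by blast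
  define lt where "lt = (\<lambda>(p::real^'n) a b. (e (p$a) \<noteq> e (p$b) \<and> (e (p$a), e (p$b)) \<in> ?R) \<or>
                                          (e (p$a) = e (p$b) \<and> \<tau> a < \<tau> b))"
  define inX where "inX = (\<lambda>p::real^'n. \<forall>l\<in>J. p$l \<in> X)"
  have lt_asym: "lt p a b \<Longrightarrow> lt p b a \<Longrightarrow> False" for p a b
    unfolding lt_def using Ranti by auto
  have lt_tot: "inX p \<Longrightarrow> a \<in> J \<Longrightarrow> b \<in> J \<Longrightarrow> a \<noteq> b \<Longrightarrow> lt p a b \<or> lt p b a" for p a b
  proof -
    assume p: "inX p" and ab: "a \<in> J" "b \<in> J" "a \<noteq> b"
    have F: "e (p$a) \<in> Field ?R" "e (p$b) \<in> Field ?R" using p ab e(2) unfolding inX_def by auto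
    have "\<tau> a \<noteq> \<tau> b" using \<tau> ab(3) by (meson injD)
    show ?thesis
    proof (cases "e (p$a) = e (p$b)")
      case True then show ?thesis unfolding lt_def using \<open>\<tau> a \<noteq> \<tau> b\<close> by (simp add: linorder_neq_iff)
    next
      case False then show ?thesis unfolding lt_def using Rtot[OF F] by blast
    qed
  qed
  have Rtr: "trans ?R" using Rtrans unfolding trans_def by blast
  have Ran: "antisym ?R" using Ranti unfolding antisym_def by blast
  have lt_trans: "lt p a b \<Longrightarrow> lt p b c \<Longrightarrow> lt p a c" for p a b c
    unfolding lt_def by (rule lex_trans[OF Rtr Ran])
  have exmax: "inX p \<Longrightarrow> \<exists>j\<in>J. \<forall>a\<in>J. a \<noteq> j \<longrightarrow> lt p a j" for p
  proof -
    assume p: "inX p"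
    have fJ: "finite J" "J \<noteq> {}" using Suc.prems(1) by (auto simp: card_eq_0_iff[symmetric])
    show ?thesis
    proof (rule finite_max_rel_aux[OF fJ subset_refl])
      fix a b assume "a \<in> J" "b \<in> J" "a \<noteq> b" then show "lt p a b \<or> lt p b a" by (rule lt_tot[OF p])
    next
      fix a b c assume "a \<in> J" "b \<in> J" "c \<in> J" "lt p a b" "lt p b c" then show "lt p a c" using lt_trans by blast
    qed
  qed
  define jj where "jj = (\<lambda>p. SOME j. j \<in> J \<and> (\<forall>a\<in>J. a \<noteq> j \<longrightarrow> lt p a j))"
  have jj: "jj p \<in> J \<and> (\<forall>a\<in>J. a \<noteq> jj p \<longrightarrow> lt p a (jj p))" if p: "inX p" for p
  proof -
    from exmax[OF p] have "\<exists>j. j \<in> J \<and> (\<forall>a\<in>J. a \<noteq> j \<longrightarrow> lt p a j)" by blast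
    then show ?thesis unfolding jj_def by (rule someI_ex)
  qed
  define Xv where "Xv = (\<lambda>v. {u\<in>X. (e u, e v) \<in> ?R})"
  have Xv_small: "v \<in> X \<Longrightarrow> |Xv v| \<le>o |B i|" for v
  proof -
    assume v: "v \<in> X"
    have "inj_on e (Xv v)" using e(1) unfolding Xv_def by (rule inj_on_subset) auto
    moreover have "e ` Xv v \<subseteq> {b. (b, e v) \<in> ?R}" unfolding Xv_def by auto
    ultimately have "|Xv v| \<le>o |{b. (b, e v) \<in> ?R}|" using card_of_ordLeq by blast
    also have "|{b. (b, e v) \<in> ?R}| \<le>o |B i|" by (rule under_small[OF Binf]) (use v e in auto)
    finally show ?thesis .
  qed
  have cJ': "card (J - {j}) = Suc i" if "j \<in> J" for j
    using Suc.prems(1) that by (simp add: card_Diff_singleton_if)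
  have exg: "\<exists>g. Kgood (J - {j}) (Xv v) (B 0) g" if "j \<in> J" "v \<in> X" for j v
    using Suc.IH[OF cJ'[OF that(1)] Xv_small[OF that(2)]] .
  define gs where "gs = (\<lambda>j v. SOME g. Kgood (J - {j}) (Xv v) (B 0) g)"
  have gs: "j \<in> J \<Longrightarrow> v \<in> X \<Longrightarrow> Kgood (J - {j}) (Xv v) (B 0) (gs j v)" for j v
    unfolding gs_def using exg by (rule someI_ex) auto
  obtain b0 where b0: "b0 \<in> B 0" using Binf[of 0] by (metis finite.emptyI ex_in_conv)
  obtain j0 where j0: "j0 \<in> J" using Suc.prems(1) by (metis card.empty ex_in_conv nat.simps(3))
  define g where "g = (\<lambda>p. if inX p then gs (jj p) (p $ jj p) p else (j0, b0))"
  have inXv: "inX p \<Longrightarrow> l \<in> J \<Longrightarrow> p$l \<in> Xv (p $ jj p)" for p l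
  proof -
    assume p: "inX p" and l: "l \<in> J"
    have pl: "p$l \<in> X" using p l unfolding inX_def by auto
    show ?thesis
    proof (cases "l = jj p")
      case True then show ?thesis using pl e(2) Rrefl unfolding Xv_def by auto
    next
      case False
      then have "lt p l (jj p)" using jj[OF p] l by blast
      then have "(e (p$l), e (p $ jj p)) \<in> ?R"
        unfolding lt_def using Rrefl e(2) pl by auto
      then show ?thesis using pl unfolding Xv_def by auto
    qed
  qed
  have K1: "fst (g x) \<in> J \<and> snd (g x) \<in> B 0" for x
    proof (cases "inX x")
      case True
      have "jj x \<in> J" using jj[OF True] by blast
      moreover have "x $ jj x \<in> X" using True calculation unfolding inX_def by blast
      ultimately have "Kgood (J - {jj x}) (Xv (x $ jj x)) (B 0) (gs (jj x) (x $ jj x))" by (rule gs)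
      then show ?thesis using True unfolding Kgood_def g_def by auto
    next
      case False then show ?thesis using j0 b0 unfolding g_def by auto
    qed
  have K2: "fst (g x) \<noteq> m" if a: "m \<in> J \<and> (\<forall>l\<in>J. x$l \<in> X \<and> y$l \<in> X) \<and> (\<forall>l\<in>J. l \<noteq> m \<longrightarrow> x$l = y$l)
        \<and> x$m \<noteq> y$m \<and> g x = g y" for x y m
  proof -
    have ix: "inX x" and iy: "inX y" using a unfolding inX_def by auto
    have jx: "jj x \<in> J" and jy: "jj y \<in> J" using jj ix iy by blast+
    have vx: "x $ jj x \<in> X" and vy: "y $ jj y \<in> X" using ix iy jx jy unfolding inX_def by auto
    have Kx: "Kgood (J - {jj x}) (Xv (x $ jj x)) (B 0) (gs (jj x) (x $ jj x))" by (rule gs[OF jx vx])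
    have Ky: "Kgood (J - {jj y}) (Xv (y $ jj y)) (B 0) (gs (jj y) (y $ jj y))" by (rule gs[OF jy vy])
    have gx: "g x = gs (jj x) (x $ jj x) x" using ix by (simp add: g_def)
    have gy: "g y = gs (jj y) (y $ jj y) y" using iy by (simp add: g_def)
    show "fst (g x) \<noteq> m"
    proof (cases "jj x = m \<or> jj y = m")
      case True
      have "fst (g x) \<in> J - {jj x}" using Kx gx unfolding Kgood_def by auto
      moreover have "fst (g y) \<in> J - {jj y}" using Ky gy unfolding Kgood_def by auto
      ultimately show ?thesis using True a by auto
    next
      case False
      have same: "jj x = jj y"
      proof (rule ccontr)
        assume ne: "jj x \<noteq> jj y"
        have "lt x (jj y) (jj x)" using jj[OF ix] jy ne by metis
        moreover have "lt y (jj x) (jj y)" using jj[OF iy] jx ne by metis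
        moreover have "x $ jj x = y $ jj x" "x $ jj y = y $ jj y" using a False jx jy by auto
        ultimately have "lt y (jj y) (jj x)" unfolding lt_def by simp
        then show False using lt_asym \<open>lt y (jj x) (jj y)\<close> by blast
      qed
      have v: "x $ jj x = y $ jj y" using same a False jx by auto
      have g2: "gs (jj x) (x $ jj x) x = gs (jj x) (x $ jj x) y" using gx gy a same v by simp
      have "m \<in> J - {jj x}" using a False by auto
      moreover have "\<forall>l\<in>J - {jj x}. x$l \<in> Xv (x $ jj x) \<and> y$l \<in> Xv (x $ jj x)"
        using inXv[OF ix] inXv[OF iy] same v by auto
      moreover have "\<forall>l\<in>J - {jj x}. l \<noteq> m \<longrightarrow> x$l = y$l" using a by auto
      moreover have "x$m \<noteq> y$m" using a by blast
      moreover have Kx2: "\<forall>a b mm. mm \<in> J - {jj x} \<and> (\<forall>l\<in>J - {jj x}. a$l \<in> Xv (x $ jj x) \<and> b$l \<in> Xv (x $ jj x))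
          \<and> (\<forall>l\<in>J - {jj x}. l \<noteq> mm \<longrightarrow> a$l = b$l) \<and> a$mm \<noteq> b$mm
          \<and> gs (jj x) (x $ jj x) a = gs (jj x) (x $ jj x) b \<longrightarrow> fst (gs (jj x) (x $ jj x) a) \<noteq> mm"
        using Kx unfolding Kgood_def by (rule conjunct2)
      ultimately have "fst (gs (jj x) (x $ jj x) x) \<noteq> m"
        apply -
        apply (rule Kx2[rule_format])
        using g2 by blast
      then show ?thesis using gx by simp
    qed
  qed
  have "Kgood J X (B 0) g" unfolding Kgood_def
  proof (intro conjI allI impI)
    fix x show "fst (g x) \<in> J" using K1 by blast
  next
    fix x show "snd (g x) \<in> B 0" using K1 by blast
  next
    fix x y m assume "m \<in> J \<and> (\<forall>l\<in>J. x$l \<in> X \<and> y$l \<in> X) \<and> (\<forall>l\<in>J. l \<noteq> m \<longrightarrow> x$l = y$l)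
        \<and> x$m \<noteq> y$m \<and> g x = g y"
    then show "fst (g x) \<noteq> m" by (rule K2)
  qed
  then show ?case by blast
qed




lemma succ_ge_UNIV: "succ_ge_continuum n (UNIV::real set)"
  unfolding succ_ge_continuum_def succ_iter_def
proof (intro allI impI)
  fix L :: "real set"
  assume "\<exists>A. ( |A 0|, |UNIV::real set| ) \<in> ordIso \<and> (\<forall>i<n. ( |A (Suc i)|, cardSuc |A i| ) \<in> ordIso) \<and> A n = L"
  then obtain A :: "nat \<Rightarrow> real set" where A0: "|A 0| =o |UNIV::real set|"
    and As: "\<And>i. i < n \<Longrightarrow> |A (Suc i)| =o cardSuc |A i|" and An: "A n = L" by blast
  have "i \<le> n \<Longrightarrow> |UNIV::real set| \<le>o |A i|" for i
  proof (induction i)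
    case 0 then show ?case using A0 ordIso_symmetric ordIso_imp_ordLeq by blast
  next
    case (Suc i)
    have "|UNIV::real set| \<le>o |A i|" using Suc by simp
    also have "|A i| \<le>o cardSuc |A i|" by (rule cardSuc_ordLeq[OF card_of_Card_order])
    also have "cardSuc |A i| =o |A (Suc i)|" using As[of i] Suc.prems by (simp add: ordIso_symmetric)
    finally show ?case .
  qed
  then show "|UNIV::real set| \<le>o |L|" using An by blast
qed

lemma not_repr_imp:
  assumes "\<not> (\<exists>L::real set. |L| =o cardSuc |B| )"
  shows "|UNIV::real set| <o cardSuc |B|"
proof -
  let ?r = "cardSuc |B|"
  have CR: "Card_order ?r" by (rule cardSuc_Card_order[OF card_of_Card_order])
  have WR: "Well_order ?r" using CR by (simp add: card_order_on_def)
  { assume le: "?r \<le>o |UNIV::real set|"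
    have "|Field ?r| =o ?r" by (rule card_of_Field_ordIso[OF CR])
    hence "|Field ?r| \<le>o |UNIV::real set|" using le ordIso_ordLeq_trans by blast
    then obtain g where g: "inj_on g (Field ?r)" "g ` Field ?r \<subseteq> (UNIV::real set)"
      using card_of_ordLeq by metis
    have "bij_betw g (Field ?r) (g ` Field ?r)" using g(1) by (simp add: bij_betw_imageI)
    hence "|Field ?r| =o |g ` Field ?r|" using card_of_ordIso by blast
    hence "|g ` Field ?r| =o ?r" using \<open>|Field ?r| =o ?r\<close> ordIso_symmetric ordIso_transitive by blast
    hence False using assms by blast }
  then show ?thesis using ordLess_or_ordLeq[OF card_of_Well_order WR] by blast
qed

lemma exists_min_succ:
  "\<exists>C::real set. succ_ge_continuum n C \<and> (\<forall>D::real set. succ_ge_continuum n D \<longrightarrow> |C| \<le>o |D| )"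
proof -
  let ?Q = "card_of ` {D::real set. succ_ge_continuum n D}"
  have "|UNIV::real set| \<in> ?Q" using succ_ge_UNIV by blast
  then obtain z where z: "z \<in> ?Q" "\<forall>y. (y, z) \<in> ordLess \<longrightarrow> y \<notin> ?Q"
    using wf_ordLess[unfolded wf_eq_minimal] by metis
  then obtain C where C: "succ_ge_continuum n C" "z = |C|" by blast
  have "|C| \<le>o |D|" if "succ_ge_continuum n D" for D :: "real set"
  proof -
    have "|D| \<in> ?Q" using that by blast
    then have "\<not> |D| <o |C|" using z(2) C(2) by blast
    then show ?thesis using ordLess_or_ordLeq[OF card_of_Well_order card_of_Well_order] by blast
  qed
  then show ?thesis using C by blast
qed

lemma UB:
  fixes P :: "(real^'n) set" and J :: "'n set" and C0 :: "real set"
  assumes Pfin: "finite P"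
    and offJ: "\<forall>x\<in>P. \<forall>y\<in>P. \<forall>l. l \<notin> J \<longrightarrow> x$l = y$l"
    and smp: "\<forall>m\<in>J. \<exists>x\<in>P. \<exists>y\<in>P. \<forall>l\<in>J. (x$l = y$l) \<longleftrightarrow> l \<noteq> m"
    and cJ: "card J = Suc n"
    and Phi: "succ_ge_continuum n C0"
  shows "colorable (L_edges P) C0"
proof -
  define B where "B = rec_nat C0 (\<lambda>j Bj. if \<exists>L::real set. |L| =o cardSuc |Bj|
      then (SOME L::real set. |L| =o cardSuc |Bj| ) else UNIV)"
  have B0: "B 0 = C0" by (simp add: B_def)
  have BS: "B (Suc j) = (if \<exists>L::real set. |L| =o cardSuc |B j|
      then (SOME L::real set. |L| =o cardSuc |B j| ) else UNIV)" for j by (simp add: B_def)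
  have BSex: "|B (Suc j)| =o cardSuc |B j|" if "\<exists>L::real set. |L| =o cardSuc |B j|" for j
    using that BS[of j] someI_ex[OF that] by simp
  have Bs: "|B (Suc j)| \<le>o cardSuc |B j|" for j
  proof (cases "\<exists>L::real set. |L| =o cardSuc |B j|")
    case True then show ?thesis using BSex ordIso_imp_ordLeq by blast
  next
    case False
    then have "B (Suc j) = UNIV" using BS by simp
    then show ?thesis using not_repr_imp[OF False] ordLess_imp_ordLeq by simp
  qed
  have chain: "i \<le> n \<Longrightarrow> (\<forall>j<i. |B (Suc j)| =o cardSuc |B j| ) \<or> B i = UNIV" for i
  proof (induction i)
    case 0 then show ?case by simp
  next
    case (Suc i)
    show ?case
    proof (cases "\<exists>L::real set. |L| =o cardSuc |B i|")
      case True
      have ne: "B i \<noteq> UNIV"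
      proof
        assume "B i = UNIV"
        then obtain L :: "real set" where "|L| =o cardSuc |UNIV::real set|" using True by auto
        moreover have "|L| \<le>o |UNIV::real set|" by (rule card_of_mono1) simp
        moreover have "|UNIV::real set| <o cardSuc |UNIV::real set|" by (rule cardSuc_greater[OF card_of_Card_order])
        ultimately show False
          by (meson not_ordLess_ordIso ordLeq_ordLess_trans ordIso_symmetric)
      qed
      then have "\<forall>j<i. |B (Suc j)| =o cardSuc |B j|" using Suc by simp
      then show ?thesis using BSex[OF True] less_Suc_eq by auto
    next
      case False then show ?thesis using BS by simp
    qed
  qed
  have top: "|UNIV::real set| \<le>o |B n|"
  proof (cases "B n = UNIV")
    case True then show ?thesis by (simp add: ordLeq_refl card_of_Card_order)
  next
    case False
    then have "\<forall>j<n. |B (Suc j)| =o cardSuc |B j|" using chain by blast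
    then have "succ_iter n C0 (B n)" unfolding succ_iter_def
      by (intro exI[of _ B]) (simp add: B0 ordIso_reflexive card_of_Well_order)
    then show ?thesis using Phi unfolding succ_ge_continuum_def by blast
  qed
  have C0inf: "infinite C0"
  proof
    assume fin: "finite C0"
    have "finite (B j)" for j
    proof (induction j)
      case 0 then show ?case using fin B0 by simp
    next
      case (Suc j)
      have ff: "finite (Field (cardSuc |B j| ))" using Suc card_of_cardSuc_finite by blast
      have CR: "Card_order (cardSuc |B j| )" by (rule cardSuc_Card_order[OF card_of_Card_order])
      have FI: "|Field (cardSuc |B j| )| =o cardSuc |B j|" by (rule card_of_Field_ordIso[OF CR])
      have ex: "\<exists>L::real set. |L| =o cardSuc |B j|"
      proof -
        have "|Field (cardSuc |B j| )| \<le>o |UNIV::real set|"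
          by (rule finite_le_infinite[OF ff infinite_UNIV_char_0])
        then obtain g :: "real set \<Rightarrow> real" where g: "inj_on g (Field (cardSuc |B j| ))"
          using iffD2[OF card_of_ordLeq] by blast
        have "bij_betw g (Field (cardSuc |B j| )) (g ` Field (cardSuc |B j| ))" using g by (simp add: bij_betw_imageI)
        hence "|Field (cardSuc |B j| )| =o |g ` Field (cardSuc |B j| )|" using card_of_ordIso by blast
        hence "|g ` Field (cardSuc |B j| )| =o cardSuc |B j|" using FI ordIso_symmetric ordIso_transitive by blast
        then show ?thesis by blast
      qed
      have "|B (Suc j)| =o |Field (cardSuc |B j| )|" using BSex[OF ex] FI ordIso_symmetric ordIso_transitive by blast
      then show ?case using ff card_of_ordIso_finite by blast
    qed
    then have "finite (UNIV::real set)" using top card_of_ordLeq_finite by blast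
    then show False using infinite_UNIV_char_0 by blast
  qed
  have Binf: "infinite (B j)" for j
  proof (induction j)
    case 0 then show ?case using C0inf B0 by simp
  next
    case (Suc j)
    show ?case
    proof (cases "\<exists>L::real set. |L| =o cardSuc |B j|")
      case True
      have "|B j| \<le>o cardSuc |B j|" by (rule cardSuc_ordLeq[OF card_of_Card_order])
      also have "cardSuc |B j| =o |B (Suc j)|" using BSex[OF True] by (rule ordIso_symmetric)
      finally show ?thesis using Suc card_of_ordLeq_infinite by blast
    next
      case False then show ?thesis using BS infinite_UNIV_char_0 by simp
    qed
  qed
  obtain g where g: "Kgood J UNIV (B 0) g"
    using kur[OF Binf Bs cJ top] by blast
  have "|(UNIV::'n set) \<times> C0| =o |C0|"
  proof -
    have "|UNIV::'n set| \<le>o |C0|" by (rule finite_le_infinite[OF finite_class.finite_UNIV C0inf])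
    then show ?thesis using card_of_Times_infinite[OF C0inf UNIV_not_empty] by blast
  qed
  then obtain \<iota> where \<iota>: "inj_on \<iota> ((UNIV::'n set) \<times> C0)" "\<iota> ` ((UNIV::'n set) \<times> C0) \<subseteq> C0"
    using card_of_ordLeq ordIso_imp_ordLeq by metis
  have gC: "g v \<in> (UNIV::'n set) \<times> C0" for v
  proof -
    have "snd (g v) \<in> C0" using g B0 unfolding Kgood_def by blast
    then show ?thesis by (cases "g v") auto
  qed
  define f where "f = (\<lambda>v. \<iota> (g v))"
  have fC: "f v \<in> C0" for v using gC \<iota>(2) f_def by blast
  have noedge: "\<not> (\<exists>c. \<forall>v\<in>Q. f v = c)" if Q: "Q \<in> L_edges P" for Q
  proof
    assume "\<exists>c. \<forall>v\<in>Q. f v = c"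
    then obtain c where c: "\<forall>v\<in>Q. f v = c" by blast
    have gsame: "g v = g w" if "v \<in> Q" "w \<in> Q" for v w
      using c that \<iota>(1) gC unfolding f_def by (metis inj_onD)
    obtain \<phi> where \<phi>: "\<phi> ` P = Q" "\<forall>x\<in>P. \<forall>y\<in>P. \<forall>i. x $ i = y $ i \<longrightarrow> \<phi> x $ i = \<phi> y $ i"
      and cQ: "card Q = card P" using Q unfolding L_edges_def hom_image_def by blast
    have inj: "inj_on \<phi> P" using eq_card_imp_inj_on[OF Pfin, of \<phi>] \<phi>(1) cQ by simp
    have Jne: "J \<noteq> {}" using cJ by auto
    obtain m0 where m0: "m0 \<in> J" using Jne by blast
    obtain x0 where x0: "x0 \<in> P" using smp m0 by blast
    let ?m = "fst (g (\<phi> x0))"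
    have K1: "\<forall>x. fst (g x) \<in> J \<and> snd (g x) \<in> B 0" using g unfolding Kgood_def by (rule conjunct1)
    have K2: "\<forall>x y m. m \<in> J \<and> (\<forall>l\<in>J. x$l \<in> UNIV \<and> y$l \<in> UNIV) \<and> (\<forall>l\<in>J. l \<noteq> m \<longrightarrow> x$l = y$l)
        \<and> x$m \<noteq> y$m \<and> g x = g y \<longrightarrow> fst (g x) \<noteq> m" using g unfolding Kgood_def by (rule conjunct2)
    have mJ: "?m \<in> J" using K1 by blast
    have "\<exists>x\<in>P. \<exists>y\<in>P. \<forall>l\<in>J. (x$l = y$l) \<longleftrightarrow> l \<noteq> ?m" by (rule bspec[OF smp mJ])
    then obtain x where x: "x \<in> P" "\<exists>y\<in>P. \<forall>l\<in>J. (x$l = y$l) \<longleftrightarrow> l \<noteq> ?m" by (rule bexE)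
    from x(2) obtain y where y: "y \<in> P" "\<forall>l\<in>J. (x$l = y$l) \<longleftrightarrow> l \<noteq> ?m" by (rule bexE)
    have xy: "x \<in> P" "y \<in> P" "\<forall>l\<in>J. (x$l = y$l) \<longleftrightarrow> l \<noteq> ?m" using x(1) y by simp_all
    have agree: "\<phi> x $ l = \<phi> y $ l" if "l \<noteq> ?m" for l
    proof -
      have "x$l = y$l"
      proof (cases "l \<in> J")
        case True then show ?thesis using bspec[OF xy(3) True] that by simp
      next
        case False then show ?thesis using offJ xy(1,2) by blast
      qed
      then show ?thesis using \<phi>(2) xy by blast
    qed
    have "x \<noteq> y" using bspec[OF xy(3) mJ] by auto
    hence "\<phi> x \<noteq> \<phi> y" using inj xy by (meson inj_onD)
    hence dif: "\<phi> x $ ?m \<noteq> \<phi> y $ ?m" using agree by (metis vec_eq_iff)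
    have inQ: "\<phi> x \<in> Q" "\<phi> y \<in> Q" "\<phi> x0 \<in> Q" using \<phi>(1) xy x0 by auto
    have gxy: "g (\<phi> x) = g (\<phi> y)" and gx0: "g (\<phi> x) = g (\<phi> x0)" using gsame inQ by blast+
    have ag2: "\<forall>l\<in>J. l \<noteq> ?m \<longrightarrow> \<phi> x $ l = \<phi> y $ l" using agree by blast
    have "fst (g (\<phi> x)) \<noteq> ?m"
      using K2[rule_format, of ?m "\<phi> x" "\<phi> y"] mJ ag2 dif gxy by blast
    then show False using gx0 by simp
  qed
  show ?thesis unfolding colorable_def using fC noedge by blast
qed




lemma main_T:
  fixes P :: "(real^'n) set" and J :: "'n set"
  assumes Pfin: "finite P"
    and offJ: "\<forall>x\<in>P. \<forall>y\<in>P. \<forall>l. l \<notin> J \<longrightarrow> x$l = y$l"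
    and smp: "\<forall>m\<in>J. \<exists>x\<in>P. \<exists>y\<in>P. \<forall>l\<in>J. (x$l = y$l) \<longleftrightarrow> l \<noteq> m"
    and Jne: "J \<noteq> {}"
  shows "chi_is_least_succ_ge (L_edges P) (card J - 1)"
proof -
  define n where "n = card J - 1"
  have cJ: "card J = Suc n" using Jne unfolding n_def by (simp add: card_gt_0_iff)
  have Pne: "P \<noteq> {}" using smp Jne by blast
  obtain C0 :: "real set" where C0: "succ_ge_continuum n C0"
    "\<forall>D::real set. succ_ge_continuum n D \<longrightarrow> |C0| \<le>o |D|"
    using exists_min_succ by blast
  have col: "colorable (L_edges P) C0" by (rule UB[OF Pfin offJ smp cJ C0(1)])
  have "is_chromatic_number (L_edges P) C0"
    unfolding is_chromatic_number_def
  proof (intro conjI allI impI)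
    show "colorable (L_edges P) C0" by (rule col)
    fix D :: "real set" assume "colorable (L_edges P) D"
    then have "succ_ge_continuum n D" by (rule LB[OF Pfin Pne offJ cJ])
    then show "( |C0|, |D| ) \<in> ordLeq" using C0(2) by blast
  qed
  then show ?thesis unfolding chi_is_least_succ_ge_def n_def[symmetric] using C0 by blast
qed

theorem corollary1p5:
  fixes P :: "(real^'n) set" and k :: nat
  assumes "2 \<le> k" and "card P = k"
  shows "(simple_template P \<longrightarrow> chi_is_least_succ_ge (L_edges P) (CARD('n) - 1))
       \<and> (\<forall>I. distinguisher P I \<and> card I = e_num P \<longrightarrow>
              chi_is_least_succ_ge (L_edges (Q_of P I)) (e_num P - 1))"
proof (intro conjI allI impI)
  have Pfin: "finite P" using assms by (metis card.infinite not_numeral_le_zero)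
  have two: "\<exists>x\<in>P. \<exists>y\<in>P. x \<noteq> y"
  proof -
    have "1 < card P" using assms by simp
    then have "\<not> card P \<le> Suc 0" by simp
    then show ?thesis using card_le_Suc0_iff_eq[OF Pfin] by blast
  qed
  {
    assume s: "simple_template P"
    have smp: "\<forall>m\<in>(UNIV::'n set). \<exists>x\<in>P. \<exists>y\<in>P. \<forall>l\<in>UNIV. (x$l = y$l) \<longleftrightarrow> l \<noteq> m"
      using s unfolding simple_template_def by blast
    have "chi_is_least_succ_ge (L_edges P) (card (UNIV::'n set) - 1)"
      by (rule main_T[OF Pfin _ smp]) auto
    then show "chi_is_least_succ_ge (L_edges P) (CARD('n) - 1)" by simp
  }
  fix I assume dI: "distinguisher P I \<and> card I = e_num P"
  define \<pi> where "\<pi> = (\<lambda>y::real^'n. \<chi> l. if l \<in> I then y$l else 0)"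
  have \<pi>nth: "\<pi> y $ l = (if l \<in> I then y$l else 0)" for y l unfolding \<pi>_def by simp
  have Qeq: "Q_of P I = \<pi> ` P"
  proof (intro set_eqI iffI)
    fix x assume "x \<in> Q_of P I"
    then obtain y where y: "y \<in> P" "\<forall>i\<in>I. x $ i = y $ i" "\<forall>i. i \<notin> I \<longrightarrow> x $ i = 0"
      unfolding Q_of_def by blast
    have "x = \<pi> y" using y by (simp add: vec_eq_iff \<pi>nth)
    then show "x \<in> \<pi> ` P" using y(1) by blast
  next
    fix x assume "x \<in> \<pi> ` P"
    then obtain y where "y \<in> P" "x = \<pi> y" by blast
    then show "x \<in> Q_of P I" unfolding Q_of_def by (auto simp: \<pi>nth)
  qed
  have Ine: "I \<noteq> {}" using dI two unfolding distinguisher_def by blast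
  have offI: "\<forall>x\<in>Q_of P I. \<forall>y\<in>Q_of P I. \<forall>l. l \<notin> I \<longrightarrow> x$l = y$l"
    unfolding Qeq by (auto simp: \<pi>nth)
  have smp: "\<forall>m\<in>I. \<exists>x\<in>Q_of P I. \<exists>y\<in>Q_of P I. \<forall>l\<in>I. (x$l = y$l) \<longleftrightarrow> l \<noteq> m"
  proof
    fix m assume m: "m \<in> I"
    have fI: "finite I" by simp
    have "0 < card I" using fI Ine by (simp add: card_gt_0_iff)
    hence "card (I - {m}) < e_num P" using dI m fI by simp
    hence "\<not> (\<exists>J. distinguisher P J \<and> card J = card (I - {m}))"
      unfolding e_num_def by (rule not_less_Least)
    hence "\<not> distinguisher P (I - {m})" by blast
    then obtain x y where xy: "x \<in> P" "y \<in> P" "x \<noteq> y" "\<forall>i\<in>I - {m}. x $ i = y $ i"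
      unfolding distinguisher_def by blast
    have "\<exists>i\<in>I. x $ i \<noteq> y $ i" using dI xy unfolding distinguisher_def by blast
    hence xm: "x $ m \<noteq> y $ m" using xy(4) by blast
    have "\<forall>l\<in>I. (\<pi> x $ l = \<pi> y $ l) \<longleftrightarrow> l \<noteq> m"
      using xm xy(4) by (auto simp: \<pi>nth)
    moreover have "\<pi> x \<in> Q_of P I" "\<pi> y \<in> Q_of P I" using Qeq xy by auto
    ultimately show "\<exists>x\<in>Q_of P I. \<exists>y\<in>Q_of P I. \<forall>l\<in>I. (x$l = y$l) \<longleftrightarrow> l \<noteq> m" by blast
  qed
  have Qfin: "finite (Q_of P I)" using Qeq Pfin by simp
  have "chi_is_least_succ_ge (L_edges (Q_of P I)) (card I - 1)"
    by (rule main_T[OF Qfin offI smp Ine])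
  then show "chi_is_least_succ_ge (L_edges (Q_of P I)) (e_num P - 1)" using dI by simp
qed


end
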